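(* Let $G$ be a graph and $k=k(G)>0$ such that every unit-weighted graph $H$ satisfies $$\mathsf{inter}^*_G(H)=\mathsf{inter}_G(H)\ge|E(H)|-k|V(H)|-k^2.$$ Then every unit-weighted graph $H$ satisfies $$\mathsf{inter}_G(H)\ge\frac1{27}\frac{|E(H)|^3}{k^2|V(H)|^2}-k|V(H)|,$$ so that $\mathsf{inter}_G$ is a $(27k^2,k)$-congestion measure.
   Context: Let $G=(V,E)$; $\mathcal P_{uv}$ is the set of paths in $G$ between $u,v$. A flow is $F:\bigcup\mathcal P_{uv}\to[0,\infty)$ with $F[u,v]=\sum_{p\in\mathcal P_{uv}}F(p)$; it is integral if for each $u,v$ it is supported on at most one path of $\mathcal P_{uv}$. $\mathsf{inter}(F)=\sum_{(u,v,u',v'):|\{u,v,u',v'\}|=4}\sum_{p\in\mathcal P_{uv},p'\in\mathcal P_{u'v'}}\sum_{x\in p\cap p'}F(p)F(p')$. For a graph $H$ with edge weights $w$, an $H$-flow in $G$ is a flow $F$ with an injective $\phi:V(H)\to V$ such that $F[\phi(u),\phi(v)]\ge w(u,v)$ for every edge $\{u,v\}\in E(H)$; unit-weighted means all weights are $1$. $\mathsf{inter}_G(H)$ (resp. $\mathsf{inter}^*_G(H)$) is the minimum of $\mathsf{inter}(F)$ over $H$-flows (resp. integral $H$-flows) $F$ in $G$. $\mathsf{inter}_G$ is a $(c,a)$-congestion measure if every unit-weighted graph $H=(V_H,E_H)$ satisfies $\mathsf{inter}_G(H)\ge\frac{|E_H|^3}{c|V_H|^2}-a|V_H|$. *)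

theory Defs
  imports Complex_Main "HOL-Library.Extended_Real"
begin

definition simple_graph :: "'a set \<Rightarrow> 'a set set \<Rightarrow> bool" where
  "simple_graph V E \<longleftrightarrow> finite V \<and>
     (\<forall>e\<in>E. \<exists>u v. u \<noteq> v \<and> u \<in> V \<and> v \<in> V \<and> e = {u, v})"

definition is_walk_path :: "'a set \<Rightarrow> 'a set set \<Rightarrow> 'a list \<Rightarrow> bool" where
  "is_walk_path V E p \<longleftrightarrow> p \<noteq> [] \<and> distinct p \<and> set p \<subseteq> V \<and>
     (\<forall>i. Suc i < length p \<longrightarrow> {p ! i, p ! Suc i} \<in> E)"

text \<open>An (undirected) path is identified with the pair {sequence, reversed sequence}.
  P_uv is the set of paths in G between u and v; note P_uv = P_vu.\<close>
definition paths :: "'a set \<Rightarrow> 'a set set \<Rightarrow> 'a \<Rightarrow> 'a \<Rightarrow> 'a list set set" where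
  "paths V E u v = {{p, rev p} | p. is_walk_path V E p \<and> hd p = u \<and> last p = v}"

definition all_paths :: "'a set \<Rightarrow> 'a set set \<Rightarrow> 'a list set set" where
  "all_paths V E = (\<Union>u. \<Union>v. paths V E u v)"

definition path_verts :: "'a list set \<Rightarrow> 'a set" where
  "path_verts P = (\<Union>p\<in>P. set p)"

text \<open>A flow: nonnegative weights on paths (values off paths are irrelevant).\<close>
definition is_flow :: "'a set \<Rightarrow> 'a set set \<Rightarrow> ('a list set \<Rightarrow> real) \<Rightarrow> bool" where
  "is_flow V E F \<longleftrightarrow> (\<forall>P\<in>all_paths V E. F P \<ge> 0)"

definition flow_between :: "'a set \<Rightarrow> 'a set set \<Rightarrow> ('a list set \<Rightarrow> real) \<Rightarrow> 'a \<Rightarrow> 'a \<Rightarrow> real" where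
  "flow_between V E F u v = (\<Sum>P\<in>paths V E u v. F P)"

definition integral_flow :: "'a set \<Rightarrow> 'a set set \<Rightarrow> ('a list set \<Rightarrow> real) \<Rightarrow> bool" where
  "integral_flow V E F \<longleftrightarrow> is_flow V E F \<and>
     (\<forall>u v. \<forall>P\<in>paths V E u v. \<forall>Q\<in>paths V E u v. F P \<noteq> 0 \<longrightarrow> F Q \<noteq> 0 \<longrightarrow> P = Q)"

definition inter :: "'a set \<Rightarrow> 'a set set \<Rightarrow> ('a list set \<Rightarrow> real) \<Rightarrow> real" where
  "inter V E F =
     (\<Sum>(u, v, u', v') \<in> {(u, v, u', v'). u \<in> V \<and> v \<in> V \<and> u' \<in> V \<and> v' \<in> V \<and> card {u, v, u', v'} = 4}.
        \<Sum>P\<in>paths V E u v. \<Sum>P'\<in>paths V E u' v'.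
          \<Sum>x\<in>path_verts P \<inter> path_verts P'. F P * F P')"

definition is_H_flow :: "'a set \<Rightarrow> 'a set set \<Rightarrow> 'b set \<Rightarrow> 'b set set \<Rightarrow> ('a list set \<Rightarrow> real) \<Rightarrow> bool" where
  "is_H_flow V E VH EH F \<longleftrightarrow> is_flow V E F \<and>
     (\<exists>\<phi>. inj_on \<phi> VH \<and> \<phi> ` VH \<subseteq> V \<and>
        (\<forall>a b. {a, b} \<in> EH \<longrightarrow> flow_between V E F (\<phi> a) (\<phi> b) \<ge> 1))"

text \<open>Minimum over H-flows; as an extended real, so that the empty minimum is +\<infinity>.\<close>
definition inter_G :: "'a set \<Rightarrow> 'a set set \<Rightarrow> 'b set \<Rightarrow> 'b set set \<Rightarrow> ereal" where
  "inter_G V E VH EH = (INF F\<in>{F. is_H_flow V E VH EH F}. ereal (inter V E F))"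

definition inter_star_G :: "'a set \<Rightarrow> 'a set set \<Rightarrow> 'b set \<Rightarrow> 'b set set \<Rightarrow> ereal" where
  "inter_star_G V E VH EH =
     (INF F\<in>{F. is_H_flow V E VH EH F \<and> integral_flow V E F}. ereal (inter V E F))"

definition congestion_measure :: "'a set \<Rightarrow> 'a set set \<Rightarrow> real \<Rightarrow> real \<Rightarrow> bool" where
  "congestion_measure V E c a \<longleftrightarrow>
     (\<forall>(VH :: nat set) EH. simple_graph VH EH \<longrightarrow>
        inter_G V E VH EH \<ge> ereal (real (card EH) ^ 3 / (c * real (card VH) ^ 2) - a * real (card VH)))"

end

theory Submission
  imports Defs
begin

lemma weight_sum:
  fixes p :: real
  assumes "finite A" "T \<subseteq> A"
  shows "(\<Sum>S\<in>Pow A. p ^ card S * (1-p) ^ card (A - S) * (if T \<subseteq> S then 1 else 0)) = p ^ card T"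
proof -
  define g where "g i = (if i \<in> T then 0 else 1 - p)" for i
  have fT: "finite T" using assms finite_subset by blast
  have "(\<Prod>i\<in>A. p + g i) = (\<Sum>S\<in>Pow A. (\<Prod>i\<in>S. p) * (\<Prod>i\<in>A-S. g i))"
    by (rule prod_add) (rule assms(1))
  also have "\<dots> = (\<Sum>S\<in>Pow A. p ^ card S * (1-p) ^ card (A - S) * (if T \<subseteq> S then 1 else 0))"
  proof (rule sum.cong[OF refl])
    fix S assume S: "S \<in> Pow A"
    have fAS: "finite (A - S)" using assms(1) by simp
    show "(\<Prod>i\<in>S. p) * (\<Prod>i\<in>A-S. g i) = p ^ card S * (1-p) ^ card (A - S) * (if T \<subseteq> S then 1 else 0)"
    proof (cases "T \<subseteq> S")
      case True
      then have "(\<Prod>i\<in>A-S. g i) = (\<Prod>i\<in>A-S. 1 - p)" by (intro prod.cong) (auto simp: g_def)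
      then show ?thesis using True by simp
    next
      case False
      then obtain i where "i \<in> T" "i \<notin> S" by blast
      then have "i \<in> A - S" "g i = 0" using assms(2) by (auto simp: g_def)
      then have "(\<Prod>i\<in>A-S. g i) = 0" using fAS by (meson prod_zero_iff)
      then show ?thesis using False by simp
    qed
  qed
  finally have 1: "(\<Prod>i\<in>A. p + g i) = (\<Sum>S\<in>Pow A. p ^ card S * (1-p) ^ card (A - S) * (if T \<subseteq> S then 1 else 0))" .
  have "(\<Prod>i\<in>A. p + g i) = (\<Prod>i\<in>A. if i \<in> T then p else 1)" by (intro prod.cong) (auto simp: g_def)
  also have "\<dots> = (\<Prod>i\<in>A \<inter> T. p)" using prod.inter_restrict[OF assms(1), of "\<lambda>_. p" T] by simp
  also have "\<dots> = p ^ card T" using assms(2) by (simp add: Int_absorb1)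
  finally show ?thesis using 1 by simp
qed

definition restr :: "'a set \<Rightarrow> ('a list set \<Rightarrow> real) \<Rightarrow> 'a list set \<Rightarrow> real" where
  "restr A F P = (if \<forall>q\<in>P. hd q \<in> A \<and> last q \<in> A then F P else 0)"

lemma restr_paths:
  assumes "P \<in> paths V E u v"
  shows "restr A F P = (if u \<in> A \<and> v \<in> A then F P else 0)"
proof -
  obtain p where p: "P = {p, rev p}" "is_walk_path V E p" "hd p = u" "last p = v"
    using assms unfolding paths_def by blast
  then have "p \<noteq> []" by (simp add: is_walk_path_def)
  then show ?thesis using p by (auto simp: restr_def hd_rev last_rev)
qed

lemma inter_restr:
  "inter V E (restr A F) =
     (\<Sum>(u, v, u', v') \<in> {(u, v, u', v'). u \<in> V \<and> v \<in> V \<and> u' \<in> V \<and> v' \<in> V \<and> card {u, v, u', v'} = 4}.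
        (if u \<in> A \<and> v \<in> A \<and> u' \<in> A \<and> v' \<in> A then 1 else 0) *
        (\<Sum>P\<in>paths V E u v. \<Sum>P'\<in>paths V E u' v'.
          \<Sum>x\<in>path_verts P \<inter> path_verts P'. F P * F P'))"
  unfolding inter_def
proof (rule sum.cong[OF refl], clarify)
  fix u v u' v'
  let ?c = "(if u \<in> A \<and> v \<in> A \<and> u' \<in> A \<and> v' \<in> A then 1 else 0) :: real"
  have "(\<Sum>P\<in>paths V E u v. \<Sum>P'\<in>paths V E u' v'.
          \<Sum>x\<in>path_verts P \<inter> path_verts P'. restr A F P * restr A F P') =
        (\<Sum>P\<in>paths V E u v. \<Sum>P'\<in>paths V E u' v'.
          \<Sum>x\<in>path_verts P \<inter> path_verts P'. ?c * (F P * F P'))"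
    by (intro sum.cong refl) (auto simp: restr_paths)
  also have "\<dots> = ?c * (\<Sum>P\<in>paths V E u v. \<Sum>P'\<in>paths V E u' v'.
          \<Sum>x\<in>path_verts P \<inter> path_verts P'. F P * F P')"
    by (simp add: sum_distrib_left)
  finally show "(\<Sum>P\<in>paths V E u v. \<Sum>P'\<in>paths V E u' v'.
          \<Sum>x\<in>path_verts P \<inter> path_verts P'. restr A F P * restr A F P') =
        ?c * (\<Sum>P\<in>paths V E u v. \<Sum>P'\<in>paths V E u' v'.
          \<Sum>x\<in>path_verts P \<inter> path_verts P'. F P * F P')" .
qed

lemma key:
  fixes VH :: "nat set" and p k :: real and V :: "'a set"
  assumes G: "simple_graph V E"
    and hyp: "\<forall>(VH :: nat set) EH. simple_graph VH EH \<longrightarrow>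
           inter_star_G V E VH EH = inter_G V E VH EH \<and>
           inter_G V E VH EH \<ge> ereal (real (card EH) - k * real (card VH) - k ^ 2)"
    and H: "simple_graph VH EH" and Fh: "is_H_flow V E VH EH F"
    and p0: "0 < p" and p1: "p \<le> 1"
  shows "p^2 * card EH - k * p * card VH - k^2 \<le> p^4 * inter V E F"
proof -
  from Fh obtain \<phi> where flow: "is_flow V E F" and inj: "inj_on \<phi> VH" and img: "\<phi> ` VH \<subseteq> V"
    and fl: "\<forall>a b. {a, b} \<in> EH \<longrightarrow> flow_between V E F (\<phi> a) (\<phi> b) \<ge> 1"
    unfolding is_H_flow_def by blast
  have fin: "finite VH" using H by (simp add: simple_graph_def)
  have EHsub: "EH \<subseteq> Pow VH" using H by (auto simp: simple_graph_def)
  have finEH: "finite EH" using EHsub fin by (meson finite_Pow_iff finite_subset)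
  have card2: "card e = 2" if "e \<in> EH" for e
    using H that by (auto simp: simple_graph_def)
  define w where "w S = p ^ card S * (1-p) ^ card (VH - S)" for S
  have wnn: "0 \<le> w S" for S using p0 p1 by (simp add: w_def)
  have wsum: "(\<Sum>S\<in>Pow VH. w S * (if T \<subseteq> S then 1 else 0)) = p ^ card T" if "T \<subseteq> VH" for T
    using weight_sum[OF fin that, of p] by (simp add: w_def)
  define ES where "ES S = {e\<in>EH. e \<subseteq> S}" for S
  define Q where "Q = {(u, v, u', v'). u \<in> V \<and> v \<in> V \<and> u' \<in> V \<and> v' \<in> V \<and> card {u, v, u', v'} = 4}"
  define J where "J = (\<lambda>(u, v, u', v'). (\<Sum>P\<in>paths V E u v. \<Sum>P'\<in>paths V E u' v'.
          \<Sum>x\<in>path_verts P \<inter> path_verts P'. F P * F P'))"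
  define c where "c S = (\<lambda>(u, v, u', v'). if u \<in> \<phi>`S \<and> v \<in> \<phi>`S \<and> u' \<in> \<phi>`S \<and> v' \<in> \<phi>`S then 1 else (0::real))" for S
  have interF: "inter V E F = (\<Sum>q\<in>Q. J q)" unfolding inter_def Q_def J_def by simp
  have interS: "inter V E (restr (\<phi>`S) F) = (\<Sum>q\<in>Q. c S q * J q)" for S
    unfolding inter_restr Q_def J_def c_def by (intro sum.cong refl) auto
  have Fnn: "0 \<le> F P" if "P \<in> paths V E u v" for P u v
    using flow that unfolding is_flow_def all_paths_def by blast
  have Jnn: "0 \<le> J q" for q
    unfolding J_def by (auto intro!: sum_nonneg mult_nonneg_nonneg Fnn split: prod.splits)
  have lowS: "real (card (ES S)) - k * real (card S) - k^2 \<le> inter V E (restr (\<phi>`S) F)"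
    if S: "S \<in> Pow VH" for S
  proof -
    have finS: "finite S" using S fin by (auto intro: finite_subset)
    have sg: "simple_graph S (ES S)"
      unfolding simple_graph_def
    proof (intro conjI ballI)
      show "finite S" by (rule finS)
      fix e assume e: "e \<in> ES S"
      then have "e \<in> EH" "e \<subseteq> S" by (auto simp: ES_def)
      then obtain x y where "x \<noteq> y" "e = {x, y}" using H unfolding simple_graph_def by blast
      then show "\<exists>u v. u \<noteq> v \<and> u \<in> S \<and> v \<in> S \<and> e = {u, v}" using \<open>e \<subseteq> S\<close> by blast
    qed
    have "is_H_flow V E S (ES S) (restr (\<phi>`S) F)"
      unfolding is_H_flow_def
    proof (intro conjI exI)
      show "is_flow V E (restr (\<phi> ` S) F)"
        using flow by (auto simp: is_flow_def restr_def)
      show "inj_on \<phi> S" using inj S by (auto intro: inj_on_subset)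
      show "\<phi> ` S \<subseteq> V" using img S by auto
      show "\<forall>a b. {a, b} \<in> ES S \<longrightarrow> 1 \<le> flow_between V E (restr (\<phi> ` S) F) (\<phi> a) (\<phi> b)"
      proof (intro allI impI)
        fix a b assume ab: "{a, b} \<in> ES S"
        then have "{a,b} \<in> EH" "a \<in> S" "b \<in> S" by (auto simp: ES_def)
        then have "flow_between V E (restr (\<phi> ` S) F) (\<phi> a) (\<phi> b) = flow_between V E F (\<phi> a) (\<phi> b)"
          unfolding flow_between_def by (intro sum.cong refl) (auto simp: restr_paths)
        then show "1 \<le> flow_between V E (restr (\<phi> ` S) F) (\<phi> a) (\<phi> b)" using fl \<open>{a,b} \<in> EH\<close> by simp
      qed
    qed
    then have "inter_G V E S (ES S) \<le> ereal (inter V E (restr (\<phi>`S) F))"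
      unfolding inter_G_def by (intro INF_lower) simp
    moreover have "ereal (real (card (ES S)) - k * real (card S) - k ^ 2) \<le> inter_G V E S (ES S)"
      using hyp sg by blast
    ultimately have "ereal (real (card (ES S)) - k * real (card S) - k ^ 2) \<le> ereal (inter V E (restr (\<phi>`S) F))"
      by (rule order.trans[rotated])
    then show ?thesis by simp
  qed
  have cw: "(\<Sum>S\<in>Pow VH. w S * c S q) \<le> p^4" if q: "q \<in> Q" for q
  proof -
    obtain u v u' v' where qd: "q = (u, v, u', v')" by (cases q) auto
    define D where "D = {u, v, u', v'}"
    have cD: "card D = 4" "D \<subseteq> V" using q by (auto simp: Q_def qd D_def)
    have cS: "c S q = (if D \<subseteq> \<phi>`S then 1 else 0)" for S by (simp add: c_def qd D_def)
    show ?thesis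
    proof (cases "D \<subseteq> \<phi>`VH")
      case True
      define T where "T = {a\<in>VH. \<phi> a \<in> D}"
      have TV: "T \<subseteq> VH" by (auto simp: T_def)
      have eq: "(D \<subseteq> \<phi>`S) = (T \<subseteq> S)" if "S \<subseteq> VH" for S
      proof
        assume "D \<subseteq> \<phi>`S"
        then show "T \<subseteq> S" using inj that unfolding T_def inj_on_def by blast
      next
        assume "T \<subseteq> S"
        then show "D \<subseteq> \<phi>`S" using True unfolding T_def by blast
      qed
      have "\<phi> ` T = D" using True by (auto simp: T_def)
      moreover have "inj_on \<phi> T" using inj TV by (auto intro: inj_on_subset)
      ultimately have "card T = 4" using cD card_image by fastforce
      have "(\<Sum>S\<in>Pow VH. w S * c S q) = (\<Sum>S\<in>Pow VH. w S * (if T \<subseteq> S then 1 else 0))"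
        by (intro sum.cong refl) (simp add: cS eq)
      also have "\<dots> = p^4" using wsum[OF TV] \<open>card T = 4\<close> by simp
      finally show ?thesis by simp
    next
      case False
      have "(\<Sum>S\<in>Pow VH. w S * c S q) = 0"
        by (intro sum.neutral) (use False in \<open>fastforce simp: cS\<close>)
      then show ?thesis using p0 by simp
    qed
  qed
  have upper: "(\<Sum>S\<in>Pow VH. w S * inter V E (restr (\<phi>`S) F)) \<le> p^4 * inter V E F"
  proof -
    have "(\<Sum>S\<in>Pow VH. w S * inter V E (restr (\<phi>`S) F)) = (\<Sum>S\<in>Pow VH. \<Sum>q\<in>Q. w S * (c S q * J q))"
      by (simp add: interS sum_distrib_left)
    also have "\<dots> = (\<Sum>q\<in>Q. \<Sum>S\<in>Pow VH. w S * (c S q * J q))" by (rule sum.swap)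
    also have "\<dots> = (\<Sum>q\<in>Q. J q * (\<Sum>S\<in>Pow VH. w S * c S q))"
      by (simp add: sum_distrib_left mult_ac)
    also have "\<dots> \<le> (\<Sum>q\<in>Q. J q * p^4)"
      by (intro sum_mono mult_left_mono cw Jnn)
    also have "\<dots> = p^4 * inter V E F" by (simp add: interF sum_distrib_right mult_ac)
    finally show ?thesis .
  qed
  have cardES: "real (card (ES S)) = (\<Sum>e\<in>EH. if e \<subseteq> S then 1 else 0)" for S
    unfolding ES_def using sum.inter_filter[OF finEH, of "\<lambda>_. (1::real)" "\<lambda>e. e \<subseteq> S"] by simp
  have cardS: "real (card S) = (\<Sum>a\<in>VH. if {a} \<subseteq> S then 1 else 0)" if "S \<in> Pow VH" for S
  proof -
    have "{a\<in>VH. {a} \<subseteq> S} = S" using that by auto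
    then show ?thesis using sum.inter_filter[OF fin, of "\<lambda>_. (1::real)" "\<lambda>a. {a} \<subseteq> S"] by simp
  qed
  have s1: "(\<Sum>S\<in>Pow VH. w S * real (card (ES S))) = p^2 * card EH"
  proof -
    have "(\<Sum>S\<in>Pow VH. w S * real (card (ES S))) = (\<Sum>e\<in>EH. \<Sum>S\<in>Pow VH. w S * (if e \<subseteq> S then 1 else 0))"
      by (simp add: cardES sum_distrib_left sum.swap[of _ "Pow VH"])
    also have "\<dots> = (\<Sum>e\<in>EH. p^2)"
      by (intro sum.cong refl) (use EHsub card2 wsum in auto)
    finally show ?thesis by simp
  qed
  have s2: "(\<Sum>S\<in>Pow VH. w S * real (card S)) = p * card VH"
  proof -
    have "(\<Sum>S\<in>Pow VH. w S * real (card S)) = (\<Sum>S\<in>Pow VH. w S * (\<Sum>a\<in>VH. if {a} \<subseteq> S then 1 else 0))"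
      by (intro sum.cong refl) (simp add: cardS)
    also have "\<dots> = (\<Sum>a\<in>VH. \<Sum>S\<in>Pow VH. w S * (if {a} \<subseteq> S then 1 else 0))"
      by (simp add: sum_distrib_left sum.swap[of _ "Pow VH"])
    also have "\<dots> = (\<Sum>a\<in>VH. p)"
    proof (intro sum.cong refl)
      fix a assume "a \<in> VH"
      then show "(\<Sum>S\<in>Pow VH. w S * (if {a} \<subseteq> S then 1 else 0)) = p" using wsum[of "{a}"] by simp
    qed
    finally show ?thesis by simp
  qed
  have s3: "(\<Sum>S\<in>Pow VH. w S) = 1"
    using wsum[of "{}"] by simp
  have "(\<Sum>S\<in>Pow VH. w S * (real (card (ES S)) - k * real (card S) - k^2)) =
        (\<Sum>S\<in>Pow VH. w S * real (card (ES S))) - k * (\<Sum>S\<in>Pow VH. w S * real (card S)) - k^2 * (\<Sum>S\<in>Pow VH. w S)"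
    by (simp add: right_diff_distrib sum_subtractf sum_distrib_left sum_distrib_right mult_ac)
  also have "\<dots> = p^2 * card EH - k * p * card VH - k^2" using s1 s2 s3 by simp
  finally have lower: "(\<Sum>S\<in>Pow VH. w S * (real (card (ES S)) - k * real (card S) - k^2)) = p^2 * card EH - k * p * card VH - k^2" .
  have "(\<Sum>S\<in>Pow VH. w S * (real (card (ES S)) - k * real (card S) - k^2)) \<le> (\<Sum>S\<in>Pow VH. w S * inter V E (restr (\<phi>`S) F))"
    by (intro sum_mono mult_left_mono lowS wnn)
  then show ?thesis using lower upper by linarith
qed

lemma bound:
  fixes VH :: "nat set" and k :: real and V :: "'a set"
  assumes G: "simple_graph V E" and k: "k > 0"
    and hyp: "\<forall>(VH :: nat set) EH. simple_graph VH EH \<longrightarrow>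
           inter_star_G V E VH EH = inter_G V E VH EH \<and>
           inter_G V E VH EH \<ge> ereal (real (card EH) - k * real (card VH) - k ^ 2)"
    and H: "simple_graph VH EH" and Fh: "is_H_flow V E VH EH F"
  shows "1 / 27 * (real (card EH) ^ 3 / (k ^ 2 * real (card VH) ^ 2)) - k * real (card VH) \<le> inter V E F"
proof -
  define m where "m = real (card EH)"
  define n where "n = real (card VH)"
  define I where "I = inter V E F"
  have flow: "is_flow V E F" using Fh by (simp add: is_H_flow_def)
  have Fnn: "0 \<le> F P" if "P \<in> paths V E u v" for P u v
    using flow that unfolding is_flow_def all_paths_def by blast
  have I0: "0 \<le> I" unfolding I_def inter_def
    by (auto intro!: sum_nonneg mult_nonneg_nonneg Fnn split: prod.splits)
  have "EH \<subseteq> (\<lambda>(a, b). {a, b}) ` (VH \<times> VH)"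
    using H by (auto simp: simple_graph_def)
  then have "card EH \<le> card (VH \<times> VH)"
    using H by (meson card_image_le card_mono finite_SigmaI finite_imageI order_trans simple_graph_def)
  then have mn: "m \<le> n^2" by (simp add: m_def n_def card_cartesian_product power2_eq_square flip: of_nat_mult)
  have m0: "0 \<le> m" "0 \<le> n" by (auto simp: m_def n_def)
  show ?thesis
  proof (cases "n = 0")
    case True
    then have "m = 0" using mn m0 by simp
    then show ?thesis using I0 True by (simp add: m_def n_def I_def)
  next
    case False
    then have n0: "n > 0" using m0 by simp
    show ?thesis
    proof (cases "m < 3 * k * n")
      case True
      have "m ^ 3 \<le> (3 * k * n) ^ 3" using True m0 by (intro power_mono) auto
      then have "m ^ 3 \<le> 27 * k ^ 3 * n ^ 3" by (simp add: power_mult_distrib)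
      then have "m ^ 3 / (k^2 * n^2) \<le> 27 * k * n" using k n0
        by (simp add: divide_simps power2_eq_square power3_eq_cube mult_ac)
      then have "1 / 27 * (m ^ 3 / (k ^ 2 * n ^ 2)) - k * n \<le> 0" by simp
      then show ?thesis using I0 by (simp add: m_def n_def I_def)
    next
      case False
      then have m3: "3 * k * n \<le> m" by simp
      have mpos: "m > 0" using m3 k n0 by (smt (verit) mult_pos_pos)
      define a where "a = k * n / m"
      have a0: "a > 0" using k n0 mpos by (simp add: a_def)
      have a1: "3 * a \<le> 1" using m3 mpos by (simp add: a_def field_simps)
      have kn: "k * n = a * m" using mpos by (simp add: a_def)
      have kk: "k^2 \<le> a^2 * m"
      proof -
        have "a^2 * m = k^2 * n^2 / m" using mpos by (simp add: a_def power2_eq_square)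
        moreover have "k^2 \<le> k^2 * n^2 / m"
        proof -
          have "k^2 * m \<le> k^2 * n^2" using mn by (intro mult_left_mono) auto
          then show ?thesis using mpos by (simp add: le_divide_eq)
        qed
        ultimately show ?thesis by simp
      qed
      have "(3*a)^2 * m - k * (3*a) * n - k^2 \<le> (3*a)^4 * I"
        using key[OF G hyp H Fh, of "3*a"] a0 a1 by (simp add: m_def n_def I_def)
      moreover have "k * (3*a) * n = 3 * a^2 * m" using kn by (simp add: power2_eq_square mult_ac)
      ultimately have "9 * a^2 * m - 3 * a^2 * m - k^2 \<le> 81 * a^4 * I"
        by (simp add: power_mult_distrib)
      then have "5 * a^2 * m \<le> 81 * a^4 * I" using kk by linarith
      then have "5 * m \<le> 81 * a^2 * I" using a0
        by (simp add: power4_eq_xxxx power2_eq_square mult_ac)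
      then have "5 * m \<le> 81 * (a^2 * I)" by (simp add: mult.assoc)
      then have "m \<le> 27 * (a^2 * I)" using mpos by linarith
      then have h: "m \<le> 27 * a^2 * I" by (simp add: mult.assoc)
      have "m ^ 3 / (k ^ 2 * n ^ 2) = m / a^2" using mpos k n0
        by (simp add: a_def power2_eq_square power3_eq_cube field_simps)
      also have "\<dots> \<le> 27 * I" using h a0 by (simp add: divide_simps mult_ac)
      finally have "1 / 27 * (m ^ 3 / (k ^ 2 * n ^ 2)) \<le> I" by simp
      moreover have "0 \<le> k * n" using k m0 by simp
      ultimately have "1 / 27 * (m ^ 3 / (k ^ 2 * n ^ 2)) - k * n \<le> I" by linarith
      then show ?thesis by (simp add: m_def n_def I_def)
    qed
  qed
qed

theorem lemma3p5:
  fixes V :: "'a set" and E :: "'a set set" and k :: real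
  assumes "simple_graph V E"
    and "k > 0"
    and "\<forall>(VH :: nat set) EH. simple_graph VH EH \<longrightarrow>
           inter_star_G V E VH EH = inter_G V E VH EH \<and>
           inter_G V E VH EH \<ge> ereal (real (card EH) - k * real (card VH) - k ^ 2)"
  shows "(\<forall>(VH :: nat set) EH. simple_graph VH EH \<longrightarrow>
           inter_G V E VH EH \<ge>
             ereal (1 / 27 * (real (card EH) ^ 3 / (k ^ 2 * real (card VH) ^ 2)) - k * real (card VH)))
         \<and> congestion_measure V E (27 * k ^ 2) k"
proof -
  have A: "\<forall>(VH :: nat set) EH. simple_graph VH EH \<longrightarrow>
           inter_G V E VH EH \<ge>
             ereal (1 / 27 * (real (card EH) ^ 3 / (k ^ 2 * real (card VH) ^ 2)) - k * real (card VH))"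
  proof (intro allI impI)
    fix VH :: "nat set" and EH assume H: "simple_graph VH EH"
    show "inter_G V E VH EH \<ge>
             ereal (1 / 27 * (real (card EH) ^ 3 / (k ^ 2 * real (card VH) ^ 2)) - k * real (card VH))"
      unfolding inter_G_def
      by (rule INF_greatest) (use bound[OF assms H] in simp)
  qed
  moreover have "congestion_measure V E (27 * k ^ 2) k"
    unfolding congestion_measure_def
  proof (intro allI impI)
    fix VH :: "nat set" and EH assume H: "simple_graph VH EH"
    have "real (card EH) ^ 3 / (27 * k ^ 2 * real (card VH) ^ 2) =
          1 / 27 * (real (card EH) ^ 3 / (k ^ 2 * real (card VH) ^ 2))" by simp
    then show "ereal (real (card EH) ^ 3 / (27 * k ^ 2 * real (card VH) ^ 2) - k * real (card VH)) \<le> inter_G V E VH EH"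
      using A H by (simp add: mult.assoc)
  qed
  ultimately show ?thesis by blast
qed

end
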